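(* Let $\mathcal D_1=(L_1,\|\cdot\|_1)$ and $\mathcal D_2=(L_2,\|\cdot\|_2)$ be arithmetic divisors on $\overline{\operatorname{Spec}\mathbf{Z}}$ that are non-degenerate, i.e. whose semi-norms are not identically zero. For $\mathcal D=(L,\|\cdot\|)$ let $S(\mathcal D)=\{\|x\|\mid x\in L\}\subset[0,\infty)$. Then $\mathcal D_1$ and $\mathcal D_2$ are isomorphic if and only if $S(\mathcal D_1)=S(\mathcal D_2)$.
   Context: An arithmetic divisor on $\overline{\operatorname{Spec}\mathbf{Z}}$ is a pair $(L,\|\cdot\|)$ with $L$ torsion-free abelian of rank 1 and $\|\cdot\|$ a semi-norm on $L\otimes_\mathbf{Z}\mathbf{R}$ of the form $\lambda|\phi(\cdot)|$ with $\phi:L\otimes\mathbf{R}\to\mathbf{R}$ an isomorphism and $\lambda\ge0$. An isomorphism $(L_1,\|\cdot\|_1)\to(L_2,\|\cdot\|_2)$ is a group isomorphism $\psi:L_1\to L_2$ with $\|\psi(x)\|_2=\|x\|_1$ for all $x\in L_1$. *)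

theory Defs
  imports Main "HOL.Real"
begin

definition zmult :: "int \<Rightarrow> 'a::ab_group_add \<Rightarrow> 'a" where
  "zmult n x = (if 0 \<le> n then ((+) x ^^ nat n) 0 else - (((+) x ^^ nat (- n)) 0))"

definition torsion_free_rank1 :: "'a::ab_group_add itself \<Rightarrow> bool" where
  "torsion_free_rank1 _ \<longleftrightarrow>
     (\<forall>(n::int) (x::'a). n \<noteq> 0 \<longrightarrow> zmult n x = 0 \<longrightarrow> x = 0) \<and>
     (\<exists>x::'a. x \<noteq> 0) \<and>
     (\<forall>x y::'a. \<exists>m n::int. (m \<noteq> 0 \<or> n \<noteq> 0) \<and> zmult m x = zmult n y)"

text \<open>The semi-norm on L \<otimes> R is recorded by its restriction to L (all that the
  notions of isomorphism and S(D) use): it has the form x \<mapsto> lam * |f x| where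
  f : L \<rightarrow> R is the restriction of an R-linear isomorphism L \<otimes> R \<rightarrow> R, i.e. an
  injective group homomorphism L \<rightarrow> R.\<close>
definition arith_divisor :: "('a::ab_group_add \<Rightarrow> real) \<Rightarrow> bool" where
  "arith_divisor nrm \<longleftrightarrow> torsion_free_rank1 TYPE('a) \<and>
     (\<exists>(lam::real) (f::'a \<Rightarrow> real). 0 \<le> lam \<and>
        (\<forall>x y. f (x + y) = f x + f y) \<and> inj f \<and>
        (\<forall>x. nrm x = lam * \<bar>f x\<bar>))"

definition non_degenerate :: "('a \<Rightarrow> real) \<Rightarrow> bool" where
  "non_degenerate nrm \<longleftrightarrow> (\<exists>x. nrm x \<noteq> 0)"

definition arith_divisor_iso ::
  "('a::ab_group_add \<Rightarrow> real) \<Rightarrow> ('b::ab_group_add \<Rightarrow> real) \<Rightarrow> bool" where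
  "arith_divisor_iso nrm1 nrm2 \<longleftrightarrow>
     (\<exists>\<psi>::'a \<Rightarrow> 'b. bij \<psi> \<and> (\<forall>x y. \<psi> (x + y) = \<psi> x + \<psi> y) \<and>
        (\<forall>x. nrm2 (\<psi> x) = nrm1 x))"

definition value_set :: "('a \<Rightarrow> real) \<Rightarrow> real set" where
  "value_set nrm = range nrm"

end

theory Submission
  imports Defs
begin

lemma add_neg_hom:
  assumes "\<forall>x y. g (x + y) = g x + (g y :: real)"
  shows "g (- x) = - g (x::'a::ab_group_add)"
proof -
  have "g 0 = g 0 + g 0" using assms by (metis add_0)
  hence z: "g 0 = 0" by simp
  have "g (- x + x) = g (- x) + g x" using assms by blast
  thus ?thesis using z by simp
qed

lemma range_eq:
  fixes g1 :: "'a::ab_group_add \<Rightarrow> real" and g2 :: "'b::ab_group_add \<Rightarrow> real"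
  assumes a1: "\<forall>x y. g1 (x + y) = g1 x + g1 y" and a2: "\<forall>x y. g2 (x + y) = g2 x + g2 y"
    and r: "range (\<lambda>x. \<bar>g1 x\<bar>) \<subseteq> range (\<lambda>x. \<bar>g2 x\<bar>)"
  shows "range g1 \<subseteq> range g2"
proof
  fix t assume "t \<in> range g1"
  then obtain x where t: "t = g1 x" by auto
  have "\<bar>g1 x\<bar> \<in> range (\<lambda>x. \<bar>g2 x\<bar>)" using r by auto
  then obtain y where y: "\<bar>g1 x\<bar> = \<bar>g2 y\<bar>" by auto
  show "t \<in> range g2"
  proof (cases "g1 x = g2 y")
    case True thus ?thesis using t by auto
  next
    case False
    hence "g1 x = g2 (- y)" using y add_neg_hom[OF a2] by (auto simp: abs_if split: if_splits)
    thus ?thesis using t by auto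
  qed
qed

theorem theorem3p11:
  fixes nrm1 :: "'a::ab_group_add \<Rightarrow> real" and nrm2 :: "'b::ab_group_add \<Rightarrow> real"
  assumes "arith_divisor nrm1" and "arith_divisor nrm2"
    and "non_degenerate nrm1" and "non_degenerate nrm2"
  shows "arith_divisor_iso nrm1 nrm2 \<longleftrightarrow> value_set nrm1 = value_set nrm2"
proof
  assume "arith_divisor_iso nrm1 nrm2"
  then obtain \<psi> :: "'a \<Rightarrow> 'b" where b: "bij \<psi>" and n: "\<forall>x. nrm2 (\<psi> x) = nrm1 x"
    unfolding arith_divisor_iso_def by blast
  have "range nrm2 = range (nrm2 \<circ> \<psi>)" using b by (metis bij_is_surj image_comp)
  also have "\<dots> = range nrm1" using n by (simp add: comp_def)
  finally show "value_set nrm1 = value_set nrm2" by (simp add: value_set_def)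
next
  assume vs: "value_set nrm1 = value_set nrm2"
  obtain l1 f1 where l1: "0 \<le> l1" and h1: "\<forall>x y. f1 (x + y) = f1 x + f1 y" and i1: "inj f1"
    and e1: "\<forall>x. nrm1 x = l1 * \<bar>f1 x\<bar>" using assms(1) unfolding arith_divisor_def by blast
  obtain l2 f2 where l2: "0 \<le> l2" and h2: "\<forall>x y. f2 (x + y) = f2 x + f2 y" and i2: "inj f2"
    and e2: "\<forall>x. nrm2 x = l2 * \<bar>f2 x\<bar>" using assms(2) unfolding arith_divisor_def by blast
  have p1: "l1 > 0" using assms(3) e1 l1 unfolding non_degenerate_def by force
  have p2: "l2 > 0" using assms(4) e2 l2 unfolding non_degenerate_def by force
  define g1 where "g1 x = l1 * f1 x" for x
  define g2 where "g2 x = l2 * f2 x" for x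
  have hg1: "\<forall>x y. g1 (x + y) = g1 x + g1 y" using h1 by (simp add: g1_def algebra_simps)
  have hg2: "\<forall>x y. g2 (x + y) = g2 x + g2 y" using h2 by (simp add: g2_def algebra_simps)
  have ig1: "inj g1" using i1 p1 by (auto simp: inj_def g1_def)
  have ig2: "inj g2" using i2 p2 by (auto simp: inj_def g2_def)
  have n1: "nrm1 x = \<bar>g1 x\<bar>" for x using e1 p1 by (simp add: g1_def abs_mult)
  have n2: "nrm2 x = \<bar>g2 x\<bar>" for x using e2 p2 by (simp add: g2_def abs_mult)
  have vs': "range (\<lambda>x. \<bar>g1 x\<bar>) = range (\<lambda>x. \<bar>g2 x\<bar>)"
    using vs unfolding value_set_def n1 n2 by simp
  have R: "range g1 = range g2"
    using range_eq[OF hg1 hg2] range_eq[OF hg2 hg1] vs' by blast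
  define \<psi> where "\<psi> x = inv g2 (g1 x)" for x
  have g2psi: "g2 (\<psi> x) = g1 x" for x
    unfolding \<psi>_def using R by (metis f_inv_into_f rangeI)
  have "bij \<psi>"
  proof (rule bijI)
    show "inj \<psi>" by (metis g2psi ig1 injD injI)
    show "surj \<psi>"
    proof -
      { fix y
        have "g2 y \<in> range g1" using R by auto
        then obtain x where "g2 y = g1 x" by auto
        hence "\<psi> x = y" using g2psi ig2 by (metis injD)
        hence "y \<in> range \<psi>" by auto }
      thus ?thesis by auto
    qed
  qed
  moreover have "\<forall>x y. \<psi> (x + y) = \<psi> x + \<psi> y"
  proof (intro allI)
    fix x y
    have "g2 (\<psi> (x + y)) = g2 (\<psi> x + \<psi> y)" using g2psi hg1 hg2 by simp
    thus "\<psi> (x + y) = \<psi> x + \<psi> y" using ig2 by (metis injD)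
  qed
  moreover have "\<forall>x. nrm2 (\<psi> x) = nrm1 x" using n1 n2 g2psi by simp
  ultimately show "arith_divisor_iso nrm1 nrm2" unfolding arith_divisor_iso_def by blast
qed

end
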